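(* For any integers $k\ge2$, $n\ge1$, any $k$-dimensional polytope $P$ and any $n$ positions $p_1,\dots,p_n\in P$, there exists a position $p\in P$ such that $\min_{i\in[n]}\{dis(p,p_i),dis(p,\partial P)\}\ge\frac{Disp(n;P)}{2}$.
   Context: $dis$ is Euclidean distance and $\partial P$ is the boundary of $P$. For integer $n\ge1$, $Disp(n;P)=\max_{X_1,\dots,X_n\in P}\min\{dis(X_i,\partial P),dis(X_i,X_j): i,j\in[n],i\ne j\}$. *)

theory Defs
  imports "HOL-Analysis.Analysis"
begin

text \<open>The maximum is
  rendered as a supremum (it is attained for compact P).\<close>

definition Disp :: "nat \<Rightarrow> ('a::euclidean_space) set \<Rightarrow> real" where
  "Disp n P = Sup { Min ({infdist (X i) (frontier P) | i. i < n}
                        \<union> {dist (X i) (X j) | i j. i < n \<and> j < n \<and> i \<noteq> j})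
                   | X :: nat \<Rightarrow> 'a. \<forall>i<n. X i \<in> P }"

end

theory Submission
  imports Defs
begin

lemma near_pt:
  fixes x y :: "'a::euclidean_space"
  assumes "x \<in> P" "infdist x (frontier P) > d" "dist x y \<le> d/2" "d > 0"
  shows "y \<in> P \<and> infdist y (frontier P) \<ge> d/2"
proof
  show "y \<in> P"
  proof (rule ccontr)
    assume "y \<notin> P"
    have "closed_segment x y \<inter> frontier P \<noteq> {}"
      by (rule connected_Int_frontier) (use assms \<open>y \<notin> P\<close> in auto)
    then obtain z where z: "z \<in> closed_segment x y" "z \<in> frontier P" by blast
    have "dist z x \<le> dist x y" using dist_in_closed_segment[OF z(1)] by simp
    moreover have "infdist x (frontier P) \<le> dist x z" using infdist_le[OF z(2)] .
    ultimately show False using assms by (simp add: dist_commute)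
  qed
  show "infdist y (frontier P) \<ge> d/2"
    using infdist_triangle[of x "frontier P" y] assms by (simp add: dist_commute)
qed

lemma core:
  fixes X p :: "nat \<Rightarrow> 'a::euclidean_space"
  assumes n: "n \<ge> 1" and d: "d > 0" and XP: "\<forall>i<n. X i \<in> P"
    and Xf: "\<forall>i<n. infdist (X i) (frontier P) > d"
    and Xd: "\<forall>i<n. \<forall>j<n. i \<noteq> j \<longrightarrow> dist (X i) (X j) > d"
  shows "\<exists>q\<in>P. infdist q (frontier P) \<ge> d/2 \<and> (\<forall>i<n. dist q (p i) \<ge> d/2)"
proof -
  define u :: 'a where "u = (SOME b. b \<in> Basis)"
  have uB: "u \<in> Basis" unfolding u_def by (rule someI_ex) (use nonempty_Basis in blast)
  have nu: "norm u = 1" using uB by simp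
  obtain a where a: "a < n" "\<forall>j<n. u \<bullet> X j \<le> u \<bullet> X a"
  proof -
    have "finite ((\<lambda>j. u \<bullet> X j) ` {..<n})" "(\<lambda>j. u \<bullet> X j) ` {..<n} \<noteq> {}" using n by (auto simp: lessThan_empty_iff)
    then have "Max ((\<lambda>j. u \<bullet> X j) ` {..<n}) \<in> (\<lambda>j. u \<bullet> X j) ` {..<n}" by (rule Max_in)
    then obtain a where "a < n" "Max ((\<lambda>j. u \<bullet> X j) ` {..<n}) = u \<bullet> X a" by auto
    moreover have "\<forall>j<n. u \<bullet> X j \<le> Max ((\<lambda>j. u \<bullet> X j) ` {..<n})" by auto
    ultimately show ?thesis using that by auto
  qed
  define Y where "Y j = (if j < n then X j - (d/2) *\<^sub>R u else X a + (d/2) *\<^sub>R u)" for j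
  have Yok: "Y j \<in> P \<and> infdist (Y j) (frontier P) \<ge> d/2" if "j \<le> n" for j
  proof (cases "j < n")
    case True
    have "dist (X j) (Y j) \<le> d/2" using True d nu by (simp add: Y_def dist_norm)
    then show ?thesis using near_pt[of "X j" P d "Y j"] True XP Xf d by auto
  next
    case False
    have "dist (X a) (Y j) \<le> d/2" using False d nu by (simp add: Y_def dist_norm)
    then show ?thesis using near_pt[of "X a" P d "Y j"] a XP Xf d by auto
  qed
  have Ysep: "dist (Y j) (Y j') \<ge> d" if "j \<le> n" "j' \<le> n" "j < j'" for j j'
  proof (cases "j' < n")
    case True
    then have "dist (Y j) (Y j') = dist (X j) (X j')" using that by (simp add: Y_def dist_norm)
    moreover have "dist (X j) (X j') > d" using Xd that True by auto
    ultimately show ?thesis by simp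
  next
    case False
    then have jn: "j < n" "j' = n" using that by auto
    have eq: "Y j' - Y j = (X a - X j) + d *\<^sub>R u" using jn by (simp add: Y_def algebra_simps flip: scaleR_add_left)
    have "u \<bullet> (Y j' - Y j) = u \<bullet> X a - u \<bullet> X j + d" using uB
      by (simp add: eq inner_diff_right inner_add_right)
    also have "\<dots> \<ge> d" using a jn by auto
    finally have "d \<le> u \<bullet> (Y j' - Y j)" .
    also have "\<dots> \<le> norm u * norm (Y j' - Y j)" by (rule norm_cauchy_schwarz)
    finally show ?thesis using nu by (simp add: dist_norm norm_minus_commute)
  qed
  have "\<exists>j\<le>n. \<forall>i<n. dist (Y j) (p i) \<ge> d/2"
  proof (rule ccontr)
    assume "\<not> ?thesis"
    then have "\<forall>j\<in>{..n}. \<exists>i. i < n \<and> dist (Y j) (p i) < d/2" by (auto simp: not_le) (meson leD)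
    then obtain h where h: "\<forall>j\<in>{..n}. h j < n \<and> dist (Y j) (p (h j)) < d/2" by metis
    have "\<not> inj_on h {..n}"
    proof
      assume "inj_on h {..n}"
      moreover have "h ` {..n} \<subseteq> {..<n}" using h by auto
      ultimately have "card {..n} \<le> card {..<n}" by (meson card_inj_on_le finite_lessThan)
      then show False by simp
    qed
    then obtain j j' where jj: "j \<le> n" "j' \<le> n" "j < j'" "h j = h j'"
      unfolding inj_on_def by (metis atMost_iff linorder_neqE_nat)
    have "dist (Y j) (Y j') \<le> dist (Y j) (p (h j)) + dist (Y j') (p (h j))"
      by (metis dist_commute dist_triangle)
    also have "\<dots> < d"
    proof -
      have "dist (Y j) (p (h j)) < d/2" using h jj(1) by auto
      moreover have "dist (Y j') (p (h j')) < d/2" using h jj(2) by auto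
      ultimately show ?thesis using jj(4) by simp
    qed
    finally show False using Ysep[OF jj(1-3)] by simp
  qed
  then obtain j where "j \<le> n" "\<forall>i<n. dist (Y j) (p i) \<ge> d/2" by blast
  then show ?thesis using Yok by blast
qed


lemma cont_Min_aux:
  fixes f :: "nat \<Rightarrow> 'a::topological_space \<Rightarrow> real"
  assumes "continuous_on UNIV f0" "\<And>i. continuous_on UNIV (f i)"
  shows "continuous_on UNIV (\<lambda>q. Min (insert (f0 q) ((\<lambda>i. f i q) ` {..<n})))"
proof (induction n)
  case 0
  then show ?case using assms by simp
next
  case (Suc n)
  have "Min (insert (f0 q) ((\<lambda>i. f i q) ` {..<Suc n})) = min (f n q) (Min (insert (f0 q) ((\<lambda>i. f i q) ` {..<n})))" for q
  proof -
    have "insert (f0 q) ((\<lambda>i. f i q) ` {..<Suc n}) = insert (f n q) (insert (f0 q) ((\<lambda>i. f i q) ` {..<n}))"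
      by (auto simp: lessThan_Suc)
    then show ?thesis by (simp add: Min.insert)
  qed
  then show ?case using Suc assms by (simp add: continuous_on_min)
qed

theorem lemma4:
  fixes P :: "(real ^ 'k) set" and n :: nat and p :: "nat \<Rightarrow> real ^ 'k"
  assumes "CARD('k) \<ge> 2"
    and "n \<ge> 1"
    and "polytope P"
    and "aff_dim P = int CARD('k)"
    and "\<forall>i<n. p i \<in> P"
  shows "\<exists>q\<in>P. Min ({dist q (p i) | i. i < n} \<union> {infdist q (frontier P)}) \<ge> Disp n P / 2"
proof -
  define g where "g q = Min ({dist q (p i) | i. i < n} \<union> {infdist q (frontier P)})" for q
  have seteq: "{f i | i. i < n} \<union> {c} = insert c (f ` {..<n})" for f :: "nat \<Rightarrow> real" and c
    by auto
  have g_eq: "g q = Min (insert (infdist q (frontier P)) ((\<lambda>i. dist q (p i)) ` {..<n}))" for q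
    unfolding g_def seteq ..
  have gnn: "g q \<ge> 0" for q unfolding g_eq by (simp add: infdist_nonneg)
  have Pne: "P \<noteq> {}" using assms(4) by auto
  have Pc: "compact P" using assms(3) by (rule polytope_imp_compact)
  have gc: "continuous_on P g"
  proof -
    have "continuous_on UNIV g" unfolding g_eq
      by (rule cont_Min_aux) (auto intro: continuous_intros continuous_on_infdist)
    then show ?thesis by (rule continuous_on_subset) auto
  qed
  obtain q where q: "q \<in> P" "\<forall>y\<in>P. g y \<le> g q"
    using continuous_attains_sup[OF Pc Pne gc] by blast
  have key: "\<exists>y\<in>P. g y \<ge> d/2" if d: "0 < d" "d < Disp n P" for d
  proof -
    let ?S = "{ Min ({infdist (X i) (frontier P) | i. i < n}
                        \<union> {dist (X i) (X j) | i j. i < n \<and> j < n \<and> i \<noteq> j})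
                   | X :: nat \<Rightarrow> real^'k. \<forall>i<n. X i \<in> P }"
    obtain x0 where "x0 \<in> P" using Pne by blast
    then have "?S \<noteq> {}" by auto
    moreover have "d < Sup ?S" using d(2) unfolding Disp_def .
    ultimately have "\<exists>s\<in>?S. d < s" by (rule less_cSupD)
    then obtain s where s: "s \<in> ?S" "d < s" by blast
    from s(1) obtain X where XP: "\<forall>i<n. X i \<in> P" and
      sX: "s = Min ({infdist (X i) (frontier P) | i. i < n}
                        \<union> {dist (X i) (X j) | i j. i < n \<and> j < n \<and> i \<noteq> j})" by blast
    have ds: "d < Min ({infdist (X i) (frontier P) | i. i < n}
                        \<union> {dist (X i) (X j) | i j. i < n \<and> j < n \<and> i \<noteq> j})" using s(2) sX by simp
    have fin: "finite ({infdist (X i) (frontier P) | i. i < n}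
                        \<union> {dist (X i) (X j) | i j. i < n \<and> j < n \<and> i \<noteq> j})"
    proof -
      have "{dist (X i) (X j) | i j. i < n \<and> j < n \<and> i \<noteq> j} \<subseteq> (\<lambda>(i,j). dist (X i) (X j)) ` ({..<n} \<times> {..<n})"
        by auto
      moreover have fi: "finite {infdist (X i) (frontier P) | i. i < n}"
        by simp
      moreover have "finite ((\<lambda>(i,j). dist (X i) (X j)) ` ({..<n} \<times> {..<n}))" by simp
      ultimately have "finite {dist (X i) (X j) | i j. i < n \<and> j < n \<and> i \<noteq> j}"
        using finite_subset by blast
      then show ?thesis using fi by simp
    qed
    have ne: "{infdist (X i) (frontier P) | i. i < n} \<noteq> {}" using assms(2) by (auto intro!: exI[of _ 0])
    have all: "\<forall>a\<in>({infdist (X i) (frontier P) | i. i < n}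
                        \<union> {dist (X i) (X j) | i j. i < n \<and> j < n \<and> i \<noteq> j}). d < a"
      using ds fin ne by (simp add: Min_gr_iff)
    have Xf: "\<forall>i<n. infdist (X i) (frontier P) > d" using all by blast
    have Xd: "\<forall>i<n. \<forall>j<n. i \<noteq> j \<longrightarrow> dist (X i) (X j) > d" using all by blast
    obtain y where y: "y \<in> P" "infdist y (frontier P) \<ge> d/2" "\<forall>i<n. dist y (p i) \<ge> d/2"
      using core[OF assms(2) d(1) XP Xf Xd, of p] by blast
    have "d/2 \<le> Min (insert (infdist y (frontier P)) ((\<lambda>i. dist y (p i)) ` {..<n}))"
      using y by (subst Min_ge_iff) auto
    then have "d/2 \<le> g y" unfolding g_eq .
    then show ?thesis using y by blast
  qed
  have "g q \<ge> Disp n P / 2"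
  proof (rule ccontr)
    assume "\<not> ?thesis"
    then have lt: "2 * g q < Disp n P" by simp
    define d where "d = (2 * g q + Disp n P) / 2"
    have "0 < d" "d < Disp n P" using lt gnn[of q] by (auto simp: d_def)
    then obtain y where "y \<in> P" "g y \<ge> d/2" using key by blast
    moreover have "d/2 > g q" using lt by (simp add: d_def)
    ultimately show False using q by force
  qed
  then show ?thesis using q unfolding g_def by blast
qed

end
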